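(* Let $\lambda>1$. For all $\mu\in\mathscr P(\mathcal K)$ and $\pi\in\Delta_k$, $$\Psi^\lambda_\star(\mu)\le\frac{2^\lambda\,\Delta_\star(\mu)^{\lambda-1}\,\Delta(\pi,\mu)}{\mathrm I(\pi,\mu)},$$ in both the standard and Rustichini settings (with the conventions $0/0=0$ and $c/0=\infty$ for $c>0$).
   Context: A $k$-action partial monitoring game: set $\mathcal Z$, loss $\mathcal L:[k]\times\mathcal Z\to[0,1]$, signal $\mathcal S:[k]\times\mathcal Z\to\Sigma$, $k$ finite. $\mathcal K$ = finitely supported probability distributions on $\mathcal Z$; $\Delta_k$ = probability simplex on $[k]$; $\mathcal L(a,x)=\sum_z x(z)\mathcal L(a,z)$, $\mathcal L(\pi,x)=\sum_a\pi(a)\mathcal L(a,x)$; $\mathcal S(a,x)$ = law of $\mathcal S(a,z)$, $z\sim x$. Standard setting: $\mathcal Z$ arbitrary, $\mathcal V(\pi,x)=\mathcal L(\pi,x)$, $\mathcal V_\star(x)=\min_a\mathcal L(a,x)$. Rustichini setting: $\mathcal Z$ finite, $x\,\mathrm R\,y$ iff $\mathcal S(a,x)=\mathcal S(a,y)\ \forall a$, $\mathcal V(\pi,x)=\sup_{y\,\mathrm R\,x}\mathcal L(\pi,y)$, $\mathcal V_\star(x)=\min_{\pi\in\Delta_k}\mathcal V(\pi,x)$. $\mathscr P(\mathcal K)$ = finitely supported probability measures on $\mathcal K$. For $\mu\in\mathscr P(\mathcal K)$: $\mathcal S(a,\mu)=\mathcal S(a,\sum_x\mu(x)x)$; $\mathrm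 I(\pi,\mu)=\sum_a\pi(a)\sum_{x\in\operatorname{spt}\mu}\operatorname{KL}(\mathcal S(a,\mu),\mathcal S(a,x))$; $\Delta(\pi,\mu)=\sum_x\mu(x)(\mathcal V(\pi,x)-\mathcal V_\star(x))$; $\Delta_\star(\mu)=\min_{\pi\in\Delta_k}\Delta(\pi,\mu)$; $\Psi^\lambda(\pi,\mu)=\Delta(\pi,\mu)^\lambda/\mathrm I(\pi,\mu)$; $\Psi^\lambda_\star(\mu)=\inf_{\pi\in\Delta_k}\Psi^\lambda(\pi,\mu)$. *)

theory Defs
  imports Complex_Main "HOL-Library.Extended_Real"
begin

text \<open>Actions are the naturals a < k.\<close>

definition spt :: "('b \<Rightarrow> real) \<Rightarrow> 'b set" where
  "spt f = {z. f z \<noteq> 0}"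

definition inK :: "('z \<Rightarrow> real) \<Rightarrow> bool" where
  "inK x \<longleftrightarrow> (\<forall>z. 0 \<le> x z) \<and> finite (spt x) \<and> sum x (spt x) = 1"

definition inPK :: "(('z \<Rightarrow> real) \<Rightarrow> real) \<Rightarrow> bool" where
  "inPK mu \<longleftrightarrow> (\<forall>x. 0 \<le> mu x) \<and> finite (spt mu) \<and> sum mu (spt mu) = 1
      \<and> (\<forall>x\<in>spt mu. inK x)"

definition simplex :: "nat \<Rightarrow> (nat \<Rightarrow> real) set" where
  "simplex k = {p. (\<forall>a<k. 0 \<le> p a) \<and> (\<Sum>a<k. p a) = 1}"

definition lossx :: "(nat \<Rightarrow> 'z \<Rightarrow> real) \<Rightarrow> nat \<Rightarrow> ('z \<Rightarrow> real) \<Rightarrow> real" where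
  "lossx L a x = (\<Sum>z\<in>spt x. x z * L a z)"

definition lossp :: "nat \<Rightarrow> (nat \<Rightarrow> 'z \<Rightarrow> real) \<Rightarrow> (nat \<Rightarrow> real) \<Rightarrow> ('z \<Rightarrow> real) \<Rightarrow> real" where
  "lossp k L p x = (\<Sum>a<k. p a * lossx L a x)"

definition sig :: "(nat \<Rightarrow> 'z \<Rightarrow> 's) \<Rightarrow> nat \<Rightarrow> ('z \<Rightarrow> real) \<Rightarrow> 's \<Rightarrow> real" where
  "sig S a x = (\<lambda>s. \<Sum>z\<in>{z\<in>spt x. S a z = s}. x z)"

definition mean :: "(('z \<Rightarrow> real) \<Rightarrow> real) \<Rightarrow> 'z \<Rightarrow> real" where
  "mean mu = (\<lambda>z. \<Sum>x\<in>spt mu. mu x * x z)"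

definition KL :: "('s \<Rightarrow> real) \<Rightarrow> ('s \<Rightarrow> real) \<Rightarrow> ereal" where
  "KL p q = (if \<exists>s. p s > 0 \<and> q s = 0 then \<infinity>
             else ereal (\<Sum>s\<in>spt p. p s * ln (p s / q s)))"

definition Info :: "nat \<Rightarrow> (nat \<Rightarrow> 'z \<Rightarrow> 's) \<Rightarrow> (nat \<Rightarrow> real) \<Rightarrow> (('z \<Rightarrow> real) \<Rightarrow> real) \<Rightarrow> ereal" where
  "Info k S p mu = (\<Sum>a<k. ereal (p a) * (\<Sum>x\<in>spt mu. KL (sig S a (mean mu)) (sig S a x)))"

datatype setting = Standard | Rustichini

definition Rel :: "nat \<Rightarrow> (nat \<Rightarrow> 'z \<Rightarrow> 's) \<Rightarrow> ('z \<Rightarrow> real) \<Rightarrow> ('z \<Rightarrow> real) \<Rightarrow> bool" where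
  "Rel k S x y \<longleftrightarrow> (\<forall>a<k. sig S a x = sig S a y)"

definition Val :: "setting \<Rightarrow> nat \<Rightarrow> (nat \<Rightarrow> 'z \<Rightarrow> real) \<Rightarrow> (nat \<Rightarrow> 'z \<Rightarrow> 's)
    \<Rightarrow> (nat \<Rightarrow> real) \<Rightarrow> ('z \<Rightarrow> real) \<Rightarrow> real" where
  "Val st k L S p x = (case st of
      Standard \<Rightarrow> lossp k L p x
    | Rustichini \<Rightarrow> Sup {lossp k L p y | y. inK y \<and> Rel k S y x})"

definition Valstar :: "setting \<Rightarrow> nat \<Rightarrow> (nat \<Rightarrow> 'z \<Rightarrow> real) \<Rightarrow> (nat \<Rightarrow> 'z \<Rightarrow> 's)
    \<Rightarrow> ('z \<Rightarrow> real) \<Rightarrow> real" where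
  "Valstar st k L S x = (case st of
      Standard \<Rightarrow> Min ((\<lambda>a. lossx L a x) ` {..<k})
    | Rustichini \<Rightarrow> Inf ((\<lambda>p. Val Rustichini k L S p x) ` simplex k))"

definition Gap :: "setting \<Rightarrow> nat \<Rightarrow> (nat \<Rightarrow> 'z \<Rightarrow> real) \<Rightarrow> (nat \<Rightarrow> 'z \<Rightarrow> 's)
    \<Rightarrow> (nat \<Rightarrow> real) \<Rightarrow> (('z \<Rightarrow> real) \<Rightarrow> real) \<Rightarrow> real" where
  "Gap st k L S p mu = (\<Sum>x\<in>spt mu. mu x * (Val st k L S p x - Valstar st k L S x))"

definition Gapstar :: "setting \<Rightarrow> nat \<Rightarrow> (nat \<Rightarrow> 'z \<Rightarrow> real) \<Rightarrow> (nat \<Rightarrow> 'z \<Rightarrow> 's)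
    \<Rightarrow> (('z \<Rightarrow> real) \<Rightarrow> real) \<Rightarrow> real" where
  "Gapstar st k L S mu = Inf ((\<lambda>p. Gap st k L S p mu) ` simplex k)"

definition ediv :: "real \<Rightarrow> ereal \<Rightarrow> ereal" where
  "ediv c I = (if I = 0 then (if c = 0 then 0 else \<infinity>)
               else if I = \<infinity> then 0 else ereal c / I)"

definition Psi :: "real \<Rightarrow> setting \<Rightarrow> nat \<Rightarrow> (nat \<Rightarrow> 'z \<Rightarrow> real) \<Rightarrow> (nat \<Rightarrow> 'z \<Rightarrow> 's)
    \<Rightarrow> (nat \<Rightarrow> real) \<Rightarrow> (('z \<Rightarrow> real) \<Rightarrow> real) \<Rightarrow> ereal" where
  "Psi lam st k L S p mu = ediv (Gap st k L S p mu powr lam) (Info k S p mu)"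

definition Psistar :: "real \<Rightarrow> setting \<Rightarrow> nat \<Rightarrow> (nat \<Rightarrow> 'z \<Rightarrow> real) \<Rightarrow> (nat \<Rightarrow> 'z \<Rightarrow> 's)
    \<Rightarrow> (('z \<Rightarrow> real) \<Rightarrow> real) \<Rightarrow> ereal" where
  "Psistar lam st k L S mu = (INF p\<in>simplex k. Psi lam st k L S p mu)"

end

theory Submission imports Defs "HOL-Analysis.Function_Topology" "HOL-Analysis.Elementary_Normed_Spaces" begin

definition Lb :: "(nat \<Rightarrow> 'z \<Rightarrow> real) \<Rightarrow> bool" where "Lb L \<longleftrightarrow> (\<forall>a z. 0 \<le> L a z \<and> L a z \<le> 1)"

lemma lossx_bounds:
  assumes "inK y" "Lb L"
  shows "0 \<le> lossx L a y \<and> lossx L a y \<le> 1"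
proof -
  have y: "\<And>z. 0 \<le> y z" "finite (spt y)" "sum y (spt y) = 1" using assms(1) by (auto simp: inK_def)
  have "lossx L a y \<ge> 0" unfolding lossx_def using y assms(2) by (intro sum_nonneg) (auto simp: Lb_def)
  moreover have "lossx L a y \<le> sum y (spt y)" unfolding lossx_def
    using y assms(2) by (intro sum_mono) (simp add: mult_left_le Lb_def)
  ultimately show ?thesis using y by simp
qed

lemma lossp_diff:
  assumes "inK y" "Lb L"
  shows "lossp k L p y \<le> lossp k L q y + (\<Sum>a<k. \<bar>p a - q a\<bar>)"
proof -
  have "lossp k L p y - lossp k L q y = (\<Sum>a<k. (p a - q a) * lossx L a y)"
    unfolding lossp_def by (simp add: sum_subtractf left_diff_distrib)
  also have "\<dots> \<le> (\<Sum>a<k. \<bar>p a - q a\<bar>)"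
  proof (intro sum_mono)
    fix a
    have b: "0 \<le> lossx L a y \<and> lossx L a y \<le> 1" using lossx_bounds[OF assms] .
    have "(p a - q a) * lossx L a y \<le> \<bar>(p a - q a) * lossx L a y\<bar>" by simp
    also have "\<dots> = \<bar>p a - q a\<bar> * lossx L a y" using b by (simp add: abs_mult)
    also have "\<dots> \<le> \<bar>p a - q a\<bar>" using b by (simp add: mult_left_le)
    finally show "(p a - q a) * lossx L a y \<le> \<bar>p a - q a\<bar>" .
  qed
  finally show ?thesis by simp
qed

lemma lossp_bound:
  assumes "inK y" "Lb L"
  shows "lossp k L p y \<le> (\<Sum>a<k. \<bar>p a\<bar>)"
  using lossp_diff[OF assms, where p=p and q="\<lambda>_. 0" and k=k] by (simp add: lossp_def)

lemma lossp_nonneg: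
  assumes "inK y" "Lb L" "p \<in> simplex k"
  shows "0 \<le> lossp k L p y"
  unfolding lossp_def using assms lossx_bounds[OF assms(1,2)] by (intro sum_nonneg) (auto simp: simplex_def)

lemma lossp_mix:
  "lossp k L (\<lambda>a. (1-e) * q a + e * p a) y = (1-e) * lossp k L q y + e * lossp k L p y"
  unfolding lossp_def by (simp add: distrib_right mult.assoc sum.distrib sum_distrib_left)

lemma lossp_cong: "(\<And>a. a < k \<Longrightarrow> p a = q a) \<Longrightarrow> lossp k L p y = lossp k L q y"
  unfolding lossp_def by simp

definition YY where "YY k L S p x = {lossp k L p y | y. inK y \<and> Rel k S y x}"

lemma YY_ne: "inK x \<Longrightarrow> YY k L S p x \<noteq> {}"
  unfolding YY_def Rel_def by auto

lemma YY_bdd: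
  assumes "Lb L"
  shows "bdd_above (YY k L S p x)"
  unfolding YY_def by (rule bdd_aboveI[where M="\<Sum>a<k. \<bar>p a\<bar>"]) (auto intro: lossp_bound[OF _ assms])

lemma Val_R: "Val Rustichini k L S p x = Sup (YY k L S p x)"
  unfolding Val_def YY_def by simp

lemma Val_lip:
  assumes "inK x" "Lb L"
  shows "Val st k L S p x \<le> Val st k L S q x + (\<Sum>a<k. \<bar>p a - q a\<bar>)"
proof (cases st)
  case Standard then show ?thesis using lossp_diff[OF assms] by (simp add: Val_def)
next
  case Rustichini
  have "Sup (YY k L S p x) \<le> Sup (YY k L S q x) + (\<Sum>a<k. \<bar>p a - q a\<bar>)"
  proof (rule cSup_least[OF YY_ne[OF assms(1)]])
    fix v assume "v \<in> YY k L S p x"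
    then obtain y where y: "inK y" "Rel k S y x" "v = lossp k L p y" unfolding YY_def by auto
    have "lossp k L q y \<le> Sup (YY k L S q x)"
      using y by (intro cSup_upper YY_bdd[OF assms(2)]) (auto simp: YY_def)
    then show "v \<le> Sup (YY k L S q x) + (\<Sum>a<k. \<bar>p a - q a\<bar>)"
      using lossp_diff[OF y(1) assms(2), of k p q] y(3) by linarith
  qed
  then show ?thesis using Rustichini by (simp add: Val_R)
qed

lemma Val_convex:
  assumes "inK x" "Lb L" "0 \<le> e" "e \<le> 1"
  shows "Val st k L S (\<lambda>a. (1-e) * q a + e * p a) x \<le> (1-e) * Val st k L S q x + e * Val st k L S p x"
proof (cases st)
  case Standard then show ?thesis by (simp add: Val_def lossp_mix)
next
  case Rustichini
  have "Sup (YY k L S (\<lambda>a. (1-e) * q a + e * p a) x) \<le> (1-e) * Sup (YY k L S q x) + e * Sup (YY k L S p x)"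
  proof (rule cSup_least[OF YY_ne[OF assms(1)]])
    fix v assume "v \<in> YY k L S (\<lambda>a. (1-e) * q a + e * p a) x"
    then obtain y where y: "inK y" "Rel k S y x" "v = lossp k L (\<lambda>a. (1-e) * q a + e * p a) y" unfolding YY_def by auto
    have 1: "lossp k L q y \<le> Sup (YY k L S q x)"
      using y by (intro cSup_upper YY_bdd[OF assms(2)]) (auto simp: YY_def)
    have 2: "lossp k L p y \<le> Sup (YY k L S p x)"
      using y by (intro cSup_upper YY_bdd[OF assms(2)]) (auto simp: YY_def)
    have "(1-e) * lossp k L q y \<le> (1-e) * Sup (YY k L S q x)" using 1 assms by (intro mult_left_mono) auto
    moreover have "e * lossp k L p y \<le> e * Sup (YY k L S p x)" using 2 assms by (intro mult_left_mono) auto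
    ultimately show "v \<le> (1-e) * Sup (YY k L S q x) + e * Sup (YY k L S p x)"
      using y(3) by (simp add: lossp_mix)
  qed
  then show ?thesis using Rustichini by (simp add: Val_R)
qed

lemma Val_cong: "(\<And>a. a < k \<Longrightarrow> p a = q a) \<Longrightarrow> Val st k L S p x = Val st k L S q x"
  unfolding Val_def using lossp_cong[of k p q L] by (simp cong: setting.case_cong)

lemma Val_nonneg:
  assumes "inK x" "Lb L" "p \<in> simplex k"
  shows "0 \<le> Val st k L S p x"
proof (cases st)
  case Standard then show ?thesis using lossp_nonneg[OF assms] by (simp add: Val_def)
next
  case Rustichini
  have "lossp k L p x \<le> Sup (YY k L S p x)"
    using assms by (intro cSup_upper YY_bdd[OF assms(2)]) (auto simp: YY_def Rel_def)
  then show ?thesis using Rustichini lossp_nonneg[OF assms] by (simp add: Val_R)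
qed

lemma Valstar_le:
  assumes "inK x" "Lb L" "p \<in> simplex k"
  shows "Valstar st k L S x \<le> Val st k L S p x"
proof (cases st)
  case Standard
  have k: "k > 0" using assms(3) by (auto simp: simplex_def intro: ccontr)
  let ?m = "Min ((\<lambda>a. lossx L a x) ` {..<k})"
  have "?m = (\<Sum>a<k. p a * ?m)" using assms(3) by (simp add: simplex_def flip: sum_distrib_right)
  also have "\<dots> \<le> (\<Sum>a<k. p a * lossx L a x)"
    using assms(3) k by (intro sum_mono mult_left_mono) (auto simp: simplex_def)
  finally show ?thesis using Standard by (simp add: Val_def Valstar_def lossp_def)
next
  case Rustichini
  have "Inf ((\<lambda>p. Val Rustichini k L S p x) ` simplex k) \<le> Val Rustichini k L S p x"
    using assms Val_nonneg[OF assms(1,2)] by (intro cInf_lower bdd_belowI[where m=0]) auto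
  then show ?thesis using Rustichini by (simp add: Valstar_def)
qed


lemma inPK_D:
  assumes "inPK mu"
  shows "\<And>x. 0 \<le> mu x" "finite (spt mu)" "sum mu (spt mu) = 1" "\<And>x. x \<in> spt mu \<Longrightarrow> inK x"
  using assms by (auto simp: inPK_def)

lemma Gap_convex:
  assumes "inPK mu" "Lb L" "0 \<le> e" "e \<le> 1"
  shows "Gap st k L S (\<lambda>a. (1-e) * q a + e * p a) mu \<le> (1-e) * Gap st k L S q mu + e * Gap st k L S p mu"
proof -
  note m = inPK_D[OF assms(1)]
  have "Gap st k L S (\<lambda>a. (1-e) * q a + e * p a) mu \<le>
     (\<Sum>x\<in>spt mu. mu x * ((1-e) * (Val st k L S q x - Valstar st k L S x) + e * (Val st k L S p x - Valstar st k L S x)))"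
    unfolding Gap_def
  proof (intro sum_mono mult_left_mono)
    fix x assume "x \<in> spt mu"
    then have "inK x" using m by auto
    from Val_convex[OF this assms(2-4), of st k S q p]
    show "Val st k L S (\<lambda>a. (1 - e) * q a + e * p a) x - Valstar st k L S x
         \<le> (1 - e) * (Val st k L S q x - Valstar st k L S x) + e * (Val st k L S p x - Valstar st k L S x)"
      by (simp add: algebra_simps)
  qed (use m in auto)
  also have "\<dots> = (1-e) * Gap st k L S q mu + e * Gap st k L S p mu"
    unfolding Gap_def by (simp add: distrib_left sum.distrib sum_distrib_left mult.left_commute)
  finally show ?thesis .
qed

lemma Gap_cong: "(\<And>a. a < k \<Longrightarrow> p a = q a) \<Longrightarrow> Gap st k L S p mu = Gap st k L S q mu"
proof -
  assume h: "\<And>a. a < k \<Longrightarrow> p a = q a"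
  have "\<And>x. Val st k L S p x = Val st k L S q x" using Val_cong[of k p q st L S] h by blast
  then show ?thesis unfolding Gap_def by simp
qed

lemma Gap_nonneg:
  assumes "inPK mu" "Lb L" "p \<in> simplex k"
  shows "0 \<le> Gap st k L S p mu"
  unfolding Gap_def using inPK_D[OF assms(1)] Valstar_le[OF _ assms(2,3), where st=st and S=S]
  by (intro sum_nonneg mult_nonneg_nonneg) auto

lemma Gap_lip:
  assumes "inPK mu" "Lb L"
  shows "Gap st k L S p mu \<le> Gap st k L S q mu + (\<Sum>a<k. \<bar>p a - q a\<bar>)"
proof -
  note m = inPK_D[OF assms(1)]
  have "Gap st k L S p mu - Gap st k L S q mu = (\<Sum>x\<in>spt mu. mu x * (Val st k L S p x - Val st k L S q x))"
    unfolding Gap_def by (simp add: sum_subtractf right_diff_distrib)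
  also have "\<dots> \<le> (\<Sum>x\<in>spt mu. mu x * (\<Sum>a<k. \<bar>p a - q a\<bar>))"
    using m Val_lip[OF _ assms(2), where st=st and k=k and S=S and p=p and q=q] by (intro sum_mono mult_left_mono) (auto simp: algebra_simps)
  also have "\<dots> = (\<Sum>a<k. \<bar>p a - q a\<bar>)" using m by (simp flip: sum_distrib_right)
  finally show ?thesis by simp
qed

lemma D_tendsto: "((\<lambda>p::nat\<Rightarrow>real. \<Sum>a<k. \<bar>p a - q a\<bar>) \<longlongrightarrow> 0) (at q within A)"
proof -
  have "continuous_on UNIV (\<lambda>p::nat\<Rightarrow>real. \<Sum>a<k. \<bar>p a - q a\<bar>)"
    by (intro continuous_intros continuous_on_product_coordinates)
  then have "((\<lambda>p::nat\<Rightarrow>real. \<Sum>a<k. \<bar>p a - q a\<bar>) \<longlongrightarrow> 0) (at q within UNIV)"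
    unfolding continuous_on_def by (metis (no_types, lifting) UNIV_I abs_eq_0_iff diff_self sum.neutral)
  then show ?thesis by (rule tendsto_within_subset) auto
qed

lemma Gap_cont:
  assumes "inPK mu" "Lb L"
  shows "continuous_on A (\<lambda>p. Gap st k L S p mu)"
  unfolding continuous_on_def
proof (intro ballI)
  fix q assume "q \<in> A"
  have "((\<lambda>p. Gap st k L S p mu - Gap st k L S q mu) \<longlongrightarrow> 0) (at q within A)"
  proof (rule Lim_null_comparison[OF _ D_tendsto])
    show "\<forall>\<^sub>F p in at q within A. norm (Gap st k L S p mu - Gap st k L S q mu) \<le> (\<Sum>a<k. \<bar>p a - q a\<bar>)"
    proof (intro always_eventually allI)
      fix p :: "nat \<Rightarrow> real"
      have 1: "Gap st k L S p mu \<le> Gap st k L S q mu + (\<Sum>a<k. \<bar>p a - q a\<bar>)" by (rule Gap_lip[OF assms])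
      have 2: "Gap st k L S q mu \<le> Gap st k L S p mu + (\<Sum>a<k. \<bar>q a - p a\<bar>)" by (rule Gap_lip[OF assms])
      have "(\<Sum>a<k. \<bar>q a - p a\<bar>) = (\<Sum>a<k. \<bar>p a - q a\<bar>)" by (simp add: abs_minus_commute)
      then show "norm (Gap st k L S p mu - Gap st k L S q mu) \<le> (\<Sum>a<k. \<bar>p a - q a\<bar>)" using 1 2 by simp
    qed
  qed
  then show "((\<lambda>p. Gap st k L S p mu) \<longlongrightarrow> Gap st k L S q mu) (at q within A)"
    by (simp add: LIM_zero_iff)
qed

definition CC :: "nat \<Rightarrow> (nat \<Rightarrow> real) set" where
  "CC k = PiE UNIV (\<lambda>a. if a < k then {0..1} else {0}) \<inter> {p. (\<Sum>a<k. p a) = 1}"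

lemma CC_compact: "compact (CC k)"
proof -
  have "compactin (product_topology (\<lambda>_. euclidean) UNIV) (PiE UNIV (\<lambda>a::nat. if a < k then {0..1::real} else {0}))"
    by (subst compactin_PiE) auto
  then have "compact (PiE UNIV (\<lambda>a::nat. if a < k then {0..1::real} else {0}))"
    by (simp add: euclidean_product_topology)
  moreover have "closed {p::nat\<Rightarrow>real. (\<Sum>a<k. p a) = 1}"
    by (intro closed_Collect_eq continuous_intros continuous_on_product_coordinates)
  ultimately show ?thesis unfolding CC_def by auto
qed

lemma CC_sub: "CC k \<subseteq> simplex k"
  unfolding CC_def simplex_def by (auto simp: PiE_iff) (metis atLeastAtMost_iff)

lemma CC_restr:
  assumes "p \<in> simplex k"
  shows "(\<lambda>a. if a < k then p a else 0) \<in> CC k"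
proof -
  have "p a \<le> 1" if "a < k" for a
  proof -
    have "p a \<le> (\<Sum>a<k. p a)" using assms that by (intro member_le_sum) (auto simp: simplex_def)
    then show ?thesis using assms by (simp add: simplex_def)
  qed
  then show ?thesis using assms unfolding CC_def simplex_def by (auto simp: PiE_def Pi_def extensional_def)
qed

lemma Gap_attain:
  assumes "inPK mu" "Lb L" "p \<in> simplex k"
  shows "\<exists>q\<in>simplex k. Gapstar st k L S mu = Gap st k L S q mu"
proof -
  have "CC k \<noteq> {}" using CC_restr[OF assms(3)] by auto
  from continuous_attains_inf[OF CC_compact this Gap_cont[OF assms(1,2)]]
  obtain q where q: "q \<in> CC k" "\<And>y. y \<in> CC k \<Longrightarrow> Gap st k L S q mu \<le> Gap st k L S y mu" by blast
  have le: "Gap st k L S q mu \<le> Gap st k L S p' mu" if "p' \<in> simplex k" for p'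
  proof -
    have "Gap st k L S q mu \<le> Gap st k L S (\<lambda>a. if a < k then p' a else 0) mu" using q CC_restr[OF that] by auto
    also have "\<dots> = Gap st k L S p' mu" by (rule Gap_cong) auto
    finally show ?thesis .
  qed
  have qs: "q \<in> simplex k" using q CC_sub by auto
  have "Gapstar st k L S mu = Gap st k L S q mu"
    unfolding Gapstar_def using qs le by (intro cInf_eq_minimum) auto
  then show ?thesis using qs by blast
qed



lemma KL_nonneg:
  fixes P Q :: "'s \<Rightarrow> real"
  assumes "\<And>s. 0 \<le> P s" "\<And>s. 0 \<le> Q s" "finite (spt P)" "sum P (spt P) = 1"
    "\<And>F. finite F \<Longrightarrow> sum Q F \<le> 1"
  shows "0 \<le> KL P Q"
proof (cases "\<exists>s. P s > 0 \<and> Q s = 0")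
  case True then show ?thesis by (simp add: KL_def)
next
  case False
  have "(\<Sum>s\<in>spt P. P s - Q s) \<le> (\<Sum>s\<in>spt P. P s * ln (P s / Q s))"
  proof (intro sum_mono)
    fix s assume "s \<in> spt P"
    then have p: "P s > 0" using assms(1)[of s] by (auto simp: spt_def)
    then have q: "Q s > 0" using False assms(2)[of s] by force
    have "ln (Q s / P s) \<le> Q s / P s - 1" using p q by (intro ln_le_minus_one) auto
    moreover have "ln (P s / Q s) = - ln (Q s / P s)" using p q by (simp add: ln_div)
    ultimately have "P s * (1 - Q s / P s) \<le> P s * ln (P s / Q s)" using p by (intro mult_left_mono) auto
    then show "P s - Q s \<le> P s * ln (P s / Q s)" using p by (simp add: algebra_simps)
  qed
  moreover have "(\<Sum>s\<in>spt P. P s - Q s) \<ge> 0" using assms by (simp add: sum_subtractf)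
  ultimately show ?thesis using False by (simp add: KL_def)
qed

lemma sig_props:
  fixes S :: "nat \<Rightarrow> 'z \<Rightarrow> 's" and x :: "'z \<Rightarrow> real"
  assumes "\<And>z. 0 \<le> x z" "finite (spt x)" "sum x (spt x) = 1"
  shows "\<And>s. 0 \<le> sig S a x s" "finite (spt (sig S a x))" "sum (sig S a x) (spt (sig S a x)) = 1"
    "\<And>F. finite F \<Longrightarrow> sum (sig S a x) F \<le> 1"
proof -
  show nn: "\<And>s. 0 \<le> sig S a x s" unfolding sig_def using assms by (auto intro: sum_nonneg)
  have z: "sig S a x s = 0" if "s \<notin> S a ` spt x" for s
    unfolding sig_def using that by (auto intro!: sum.neutral)
  have sub: "spt (sig S a x) \<subseteq> S a ` spt x" using z by (auto simp: spt_def)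
  show fin: "finite (spt (sig S a x))" using sub assms(2) finite_surj by blast
  have tot: "sum (sig S a x) (S a ` spt x) = 1"
    unfolding sig_def using sum.image_gen[OF assms(2), of x "S a"] assms(3) by simp
  have "sum (sig S a x) (spt (sig S a x)) = sum (sig S a x) (S a ` spt x)"
    using sub assms(2) by (intro sum.mono_neutral_left) (auto simp: spt_def)
  then show "sum (sig S a x) (spt (sig S a x)) = 1" using tot by simp
  fix F :: "'s set" assume F: "finite F"
  have "sum (sig S a x) F = sum (sig S a x) (F \<inter> S a ` spt x)"
    using F z by (intro sum.mono_neutral_right) auto
  also have "\<dots> \<le> sum (sig S a x) (S a ` spt x)"
    using nn assms(2) by (intro sum_mono2) auto
  finally show "sum (sig S a x) F \<le> 1" using tot by simp
qed

lemma mean_props: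
  assumes "inPK mu"
  shows "\<And>z. 0 \<le> mean mu z" "finite (spt (mean mu))" "sum (mean mu) (spt (mean mu)) = 1"
proof -
  note m = inPK_D[OF assms]
  have xK: "\<And>x. x \<in> spt mu \<Longrightarrow> (\<forall>z. 0 \<le> x z) \<and> finite (spt x) \<and> sum x (spt x) = 1"
    using m(4) by (auto simp: inK_def)
  show "\<And>z. 0 \<le> mean mu z" unfolding mean_def
    by (intro sum_nonneg mult_nonneg_nonneg m(1)) (use xK in blast)
  define U where "U = (\<Union>x\<in>spt mu. spt x)"
  have U: "finite U" unfolding U_def by (intro finite_UN_I m(2)) (use xK in blast)
  have sub: "spt (mean mu) \<subseteq> U"
  proof
    fix z assume "z \<in> spt (mean mu)"
    then have "(\<Sum>x\<in>spt mu. mu x * x z) \<noteq> 0" by (simp add: spt_def mean_def)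
    then have "\<not> (\<forall>x\<in>spt mu. mu x * x z = 0)" using sum.neutral[of "spt mu" "\<lambda>x. mu x * x z"] by argo
    then obtain x where "x \<in> spt mu" "mu x * x z \<noteq> 0" by blast
    then show "z \<in> U" unfolding U_def spt_def by auto
  qed
  then show "finite (spt (mean mu))" using U finite_subset by blast
  have "sum (mean mu) (spt (mean mu)) = sum (mean mu) U"
    using sub U by (intro sum.mono_neutral_left) (auto simp: spt_def)
  also have "\<dots> = (\<Sum>x\<in>spt mu. mu x * sum x U)"
    unfolding mean_def by (subst sum.swap) (simp only: sum_distrib_left)
  also have "\<dots> = (\<Sum>x\<in>spt mu. mu x)"
  proof (intro sum.cong refl)
    fix x assume x: "x \<in> spt mu"
    have "sum x U = sum x (spt x)"
      using x U by (intro sum.mono_neutral_right) (auto simp: spt_def U_def)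
    then show "mu x * sum x U = mu x" using xK[OF x] by simp
  qed
  finally show "sum (mean mu) (spt (mean mu)) = 1" using m by simp
qed

lemma T_nonneg:
  assumes "inPK mu"
  shows "0 \<le> (\<Sum>x\<in>spt mu. KL (sig S a (mean mu)) (sig S a x))"
proof (intro sum_nonneg)
  fix x assume "x \<in> spt mu"
  then have "inK x" using inPK_D[OF assms] by auto
  then have x: "\<And>z. 0 \<le> x z" "finite (spt x)" "sum x (spt x) = 1" by (auto simp: inK_def)
  note P = sig_props[OF mean_props[OF assms], where S=S and a=a]
  note Q = sig_props[OF x, where S=S and a=a]
  show "0 \<le> KL (sig S a (mean mu)) (sig S a x)"
    by (rule KL_nonneg) (use P Q in auto)
qed

lemma Info_nonneg:
  assumes "inPK mu" "p \<in> simplex k"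
  shows "0 \<le> Info k S p mu"
  unfolding Info_def
proof (intro sum_nonneg)
  fix a assume "a \<in> {..<k}"
  then have "0 \<le> ereal (p a)" using assms(2) by (auto simp: simplex_def)
  then show "0 \<le> ereal (p a) * (\<Sum>x\<in>spt mu. KL (sig S a (mean mu)) (sig S a x))"
    using T_nonneg[OF assms(1), where S=S and a=a] by (rule ereal_0_le_mult)
qed

lemma Info_mix:
  assumes "inPK mu" "p \<in> simplex k" "q \<in> simplex k" "0 \<le> e" "e \<le> 1"
  shows "ereal e * Info k S p mu \<le> Info k S (\<lambda>a. (1-e) * q a + e * p a) mu"
proof -
  let ?T = "\<lambda>a. (\<Sum>x\<in>spt mu. KL (sig S a (mean mu)) (sig S a x))"
  have T: "\<And>a. 0 \<le> ?T a" using T_nonneg[OF assms(1)] by blast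
  have "ereal e * Info k S p mu = (\<Sum>a<k. ereal e * (ereal (p a) * ?T a))"
    unfolding Info_def using T assms(2) by (intro sum_ereal_right_distrib) (auto simp: simplex_def)
  also have "\<dots> = (\<Sum>a<k. ereal (e * p a) * ?T a)"
    by (intro sum.cong refl) (metis mult.assoc times_ereal.simps(1))
  also have "\<dots> \<le> (\<Sum>a<k. ereal ((1-e) * q a + e * p a) * ?T a)"
  proof (intro sum_mono ereal_mult_right_mono T)
    fix a assume "a \<in> {..<k}"
    then have "0 \<le> (1-e) * q a" using assms(3,5) by (auto simp: simplex_def)
    then show "ereal (e * p a) \<le> ereal ((1-e) * q a + e * p a)" by simp
  qed
  finally show ?thesis by (simp add: Info_def)
qed

lemma mix_simplex:
  assumes "p \<in> simplex k" "q \<in> simplex k" "0 \<le> e" "e \<le> 1"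
  shows "(\<lambda>a. (1-e) * q a + e * p a) \<in> simplex k"
  using assms unfolding simplex_def by (auto simp: sum.distrib simp flip: sum_distrib_left)



lemma real_ident:
  fixes ds d r lam :: real
  assumes "0 < ds" "0 < d" "0 < r"
  shows "(2*ds) powr lam / ((ds/d) * r) = 2 powr lam * ds powr (lam - 1) * d / r"
proof -
  have "(2*ds) powr lam = 2 powr lam * ds powr lam" using assms by (simp add: powr_mult)
  also have "ds powr lam = ds powr (lam - 1) * ds"
    using assms powr_add[of ds "lam - 1" 1] by simp
  finally show ?thesis using assms by (simp add: field_simps)
qed

theorem lemma2:
  fixes lam :: real and st :: setting and k :: nat
    and L :: "nat \<Rightarrow> 'z \<Rightarrow> real" and S :: "nat \<Rightarrow> 'z \<Rightarrow> 's"
    and mu :: "('z \<Rightarrow> real) \<Rightarrow> real" and p :: "nat \<Rightarrow> real"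
  assumes "lam > 1"
    and "\<And>a z. 0 \<le> L a z \<and> L a z \<le> 1"
    and "st = Rustichini \<Longrightarrow> finite (UNIV :: 'z set)"
    and "inPK mu"
    and "p \<in> simplex k"
  shows "Psistar lam st k L S mu \<le>
    ediv (2 powr lam * Gapstar st k L S mu powr (lam - 1) * Gap st k L S p mu) (Info k S p mu)"
proof -
  have Lb: "Lb L" using assms(2) by (simp add: Lb_def)
  obtain q where qs: "q \<in> simplex k" and qe: "Gapstar st k L S mu = Gap st k L S q mu"
    using Gap_attain[OF assms(4) Lb assms(5)] by blast
  define ds where "ds = Gapstar st k L S mu"
  define d where "d = Gap st k L S p mu"
  define I where "I = Info k S p mu"
  have ds0: "0 \<le> ds" using Gap_nonneg[OF assms(4) Lb qs, of st S] qe ds_def by simp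
  have dsd: "ds \<le> d" unfolding ds_def d_def Gapstar_def
    by (rule cInf_lower) (use assms(5) Gap_nonneg[OF assms(4) Lb] in \<open>auto intro!: bdd_belowI[where m=0]\<close>)
  have I0: "0 \<le> I" unfolding I_def by (rule Info_nonneg[OF assms(4,5)])
  have PS: "Psistar lam st k L S mu \<le> Psi lam st k L S p' mu" if "p' \<in> simplex k" for p'
    unfolding Psistar_def using that by (rule INF_lower)
  show ?thesis
  proof (cases "ds = 0")
    case True
    have "0 \<le> Info k S q mu" by (rule Info_nonneg[OF assms(4) qs])
    then have "Psi lam st k L S q mu = 0" unfolding Psi_def ediv_def using qe True ds_def
      by (cases "Info k S q mu") auto
    moreover have "ediv (2 powr lam * ds powr (lam - 1) * d) I = 0"
      using True I0 by (cases I) (auto simp: ediv_def)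
    ultimately show ?thesis using PS[OF qs] ds_def d_def I_def by simp
  next
    case False
    then have dspos: "0 < ds" using ds0 by simp
    then have dpos: "0 < d" using dsd by simp
    have cpos: "0 < 2 powr lam * ds powr (lam - 1) * d" using dspos dpos by simp
    consider "I = 0" | "I = \<infinity>" | r where "I = ereal r" "0 < r"
      using I0 by (cases I) (auto simp: less_le zero_ereal_def)
    then have "Psistar lam st k L S mu \<le> ediv (2 powr lam * ds powr (lam - 1) * d) I"
    proof cases
      case 1 then show ?thesis using dspos dpos by (simp add: ediv_def)
    next
      case 2
      have "Psi lam st k L S p mu = 0" unfolding Psi_def ediv_def using 2 I_def by simp
      then show ?thesis using PS[OF assms(5)] 2 by (simp add: ediv_def)
    next
      case 3
      define e where "e = ds / d"
      have e0: "0 < e" "e \<le> 1" using dspos dpos dsd by (auto simp: e_def)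
      define p' where "p' = (\<lambda>a. (1-e) * q a + e * p a)"
      have p's: "p' \<in> simplex k" unfolding p'_def using mix_simplex[OF assms(5) qs] e0 by simp
      have "Gap st k L S p' mu \<le> (1-e) * ds + e * d"
        unfolding p'_def using Gap_convex[OF assms(4) Lb, of e st k S q p] e0 qe ds_def d_def by simp
      also have "\<dots> \<le> 2 * ds"
      proof -
        have "(1-e) * ds \<le> ds" using e0 dspos by (simp add: mult_left_le_one_le)
        moreover have "e * d = ds" using dpos by (simp add: e_def)
        ultimately show ?thesis by simp
      qed
      finally have G: "Gap st k L S p' mu \<le> 2 * ds" .
      have G0: "0 \<le> Gap st k L S p' mu" by (rule Gap_nonneg[OF assms(4) Lb p's])
      have GP: "Gap st k L S p' mu powr lam \<le> (2 * ds) powr lam"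
        using G G0 assms(1) by (intro powr_mono2) auto
      have "ereal e * I \<le> Info k S p' mu"
        unfolding p'_def I_def using Info_mix[OF assms(4,5) qs, of e S] e0 by simp
      then have Ip: "ereal (e * r) \<le> Info k S p' mu" using 3 by simp
      have er: "0 < e * r" using e0 3 by simp
      have "Psi lam st k L S p' mu \<le> ereal ((2*ds) powr lam / (e * r))"
      proof (cases "Info k S p' mu")
        case (real r')
        then have r': "e * r \<le> r'" "0 < r'" using Ip er by auto
        have "Gap st k L S p' mu powr lam / r' \<le> (2*ds) powr lam / (e * r)"
          using GP r' er by (intro frac_le) auto
        then show ?thesis unfolding Psi_def ediv_def using real r' by simp
      next
        case PInf
        then show ?thesis unfolding Psi_def ediv_def using er dspos by simp
      next
        case MInf
        then show ?thesis using Ip by simp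
      qed
      also have "\<dots> = ediv (2 powr lam * ds powr (lam - 1) * d) I"
        using 3 real_ident[OF dspos dpos 3(2), of lam] by (simp add: ediv_def e_def)
      finally show ?thesis using PS[OF p's] by simp
    qed
    then show ?thesis using ds_def d_def I_def by simp
  qed
qed


end
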